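(* Let $n\ge1$, $d\ge0$, and let $A\subseteq\mathbb{F}_3^n$ be such that there are no $a,b,c\in A$ with $b\neq c$ and $a+b+c=0$. Let $P\in\mathbb{F}_3[x_1,\dots,x_n]$ be a polynomial of total degree at most $d$, with every variable occurring with exponent at most $2$, such that $P(x)=0$ for all $x\in\mathbb{F}_3^n\setminus A$. Then the number of $a\in A$ with $P(a)\neq0$ is at most $2\,|M(n,\lfloor d/2\rfloor)|$.
   Context: $\mathbb{F}_3$ is the field of integers modulo $3$. For integers $n\ge1$ and $e\ge 0$, $M(n,e)$ denotes the set of monomials $x_1^{\alpha_1}\cdots x_n^{\alpha_n}$ with $0\le\alpha_i\le2$ for all $i$ and $\alpha_1+\dots+\alpha_n\le e$; thus $|M(n,e)|=\sum_{i=0}^{e}\binom{n}{i}_2$, where $\binom{n}{i}_2$ is the coefficient of $x^i$ in $(1+x+x^2)^n$. *)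

theory Defs
  imports Main "HOL-Library.Numeral_Type"
begin

text \<open>F_3 is the type 3 (integers mod 3). A point of F_3^n is a function
nat => 3 vanishing outside {0..<n}.\<close>

definition F3vecs :: "nat \<Rightarrow> (nat \<Rightarrow> 3) set" where
  "F3vecs n = {x. \<forall>i\<ge>n. x i = 0}"

definition M :: "nat \<Rightarrow> nat \<Rightarrow> (nat \<Rightarrow> nat) set" where
  "M n e = {\<alpha>. (\<forall>i<n. \<alpha> i \<le> 2) \<and> (\<forall>i\<ge>n. \<alpha> i = 0) \<and> (\<Sum>i<n. \<alpha> i) \<le> e}"

text \<open>A polynomial of total degree at most d with every exponent at most 2 is
given by its coefficients c on the monomials M n d; its evaluation at x:\<close>

definition poly_eval :: "nat \<Rightarrow> nat \<Rightarrow> ((nat \<Rightarrow> nat) \<Rightarrow> 3) \<Rightarrow> (nat \<Rightarrow> 3) \<Rightarrow> 3" where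
  "poly_eval n d c x = (\<Sum>\<alpha>\<in>M n d. c \<alpha> * (\<Prod>i<n. x i ^ \<alpha> i))"

end

theory Submission imports Defs "HOL-Library.FuncSet" begin

lemma ex3: "(x::3) = 0 \<or> x = 1 \<or> x = 2"
proof -
  have "{0,1,2::3} = UNIV" by (rule card_subset_eq) (auto simp: card_insert_if)
  then show ?thesis by auto
qed

lemma finite_funs:
  assumes "\<And>i. i < n \<Longrightarrow> finite (K i)"
  shows "finite {f::nat\<Rightarrow>'a. (\<forall>i<n. f i \<in> K i) \<and> (\<forall>i\<ge>n. f i = z)}"
  using assms
proof (induction n)
  case 0
  have "{f::nat\<Rightarrow>'a. (\<forall>i<0. f i \<in> K i) \<and> (\<forall>i\<ge>0. f i = z)} = {\<lambda>_. z}" by auto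
  then show ?case by simp
next
  case (Suc n)
  let ?S = "{f::nat\<Rightarrow>'a. (\<forall>i<n. f i \<in> K i) \<and> (\<forall>i\<ge>n. f i = z)}"
  have fS: "finite ?S" using Suc by auto
  have "{f::nat\<Rightarrow>'a. (\<forall>i<Suc n. f i \<in> K i) \<and> (\<forall>i\<ge>Suc n. f i = z)}
        \<subseteq> (\<lambda>(a,f). f(n:=a)) ` (K n \<times> ?S)"
  proof
    fix f assume f: "f \<in> {f::nat\<Rightarrow>'a. (\<forall>i<Suc n. f i \<in> K i) \<and> (\<forall>i\<ge>Suc n. f i = z)}"
    have "f = (\<lambda>(a,f). f(n:=a)) (f n, f(n:=z))" by auto
    moreover have "(f n, f(n:=z)) \<in> K n \<times> ?S" using f by (auto simp: le_Suc_eq)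
    ultimately show "f \<in> (\<lambda>(a,f). f(n:=a)) ` (K n \<times> ?S)" by blast
  qed
  moreover have "finite (K n \<times> ?S)" using fS Suc.prems by auto
  ultimately show ?case by (meson finite_imageI finite_subset)
qed

lemma finite_F3vecs: "finite (F3vecs n)"
proof -
  have "F3vecs n = {f::nat\<Rightarrow>3. (\<forall>i<n. f i \<in> UNIV) \<and> (\<forall>i\<ge>n. f i = 0)}"
    by (auto simp: F3vecs_def)
  moreover have "finite {f::nat\<Rightarrow>3. (\<forall>i<n. f i \<in> UNIV) \<and> (\<forall>i\<ge>n. f i = 0)}"
    by (rule finite_funs) simp
  ultimately show ?thesis by simp
qed

lemma finite_M: "finite (M n e)"
proof -
  have "M n e \<subseteq> {f::nat\<Rightarrow>nat. (\<forall>i<n. f i \<in> {..2}) \<and> (\<forall>i\<ge>n. f i = 0)}"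
    by (auto simp: M_def)
  then show ?thesis using finite_funs[of n "\<lambda>_. {..2}" 0] finite_subset by blast
qed

definition B :: "nat \<Rightarrow> (nat \<Rightarrow> nat) \<Rightarrow> (nat \<Rightarrow> nat) set" where
  "B n g = {b. (\<forall>i<n. b i \<le> g i) \<and> (\<forall>i\<ge>n. b i = 0)}"

lemma finite_B: "finite (B n g)"
proof -
  have "B n g = {f::nat\<Rightarrow>nat. (\<forall>i<n. f i \<in> {..g i}) \<and> (\<forall>i\<ge>n. f i = 0)}"
    by (auto simp: B_def)
  then show ?thesis using finite_funs[of n "\<lambda>i. {..g i}" 0] by simp
qed

lemma prod_sum_B:
  fixes f :: "nat \<Rightarrow> nat \<Rightarrow> 'a::comm_semiring_1"
  shows "(\<Prod>i<n. \<Sum>j\<le>g i. f i j) = (\<Sum>b\<in>B n g. \<Prod>i<n. f i (b i))"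
proof (induction n)
  case 0
  have "B 0 g = {\<lambda>_. 0}" by (auto simp: B_def)
  then show ?case by simp
next
  case (Suc n)
  have inj: "inj_on (\<lambda>(j,b). b(n:=j)) ({..g n} \<times> B n g)"
  proof (rule inj_onI, clarsimp)
    fix j b j' b' assume "b \<in> B n g" "b' \<in> B n g" "b(n := j) = b'(n := j')"
    note h = this
    have "j = j'" using fun_cong[OF h(3), of n] by simp
    moreover have "b = b'"
    proof
      fix i show "b i = b' i"
      proof (cases "i = n")
        case True then show ?thesis using h(1,2) by (simp add: B_def)
      next
        case False then show ?thesis using fun_cong[OF h(3), of i] by simp
      qed
    qed
    ultimately show "j = j' \<and> b = b'" by simp
  qed
  have img: "B (Suc n) g = (\<lambda>(j,b). b(n:=j)) ` ({..g n} \<times> B n g)"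
  proof
    show "B (Suc n) g \<subseteq> (\<lambda>(j,b). b(n:=j)) ` ({..g n} \<times> B n g)"
    proof
      fix f assume f: "f \<in> B (Suc n) g"
      have "f = (\<lambda>(j,b). b(n:=j)) (f n, f(n:=0))" by auto
      moreover have "(f n, f(n:=0)) \<in> {..g n} \<times> B n g" using f by (auto simp: B_def le_Suc_eq)
      ultimately show "f \<in> (\<lambda>(j,b). b(n:=j)) ` ({..g n} \<times> B n g)" by blast
    qed
    show "(\<lambda>(j,b). b(n:=j)) ` ({..g n} \<times> B n g) \<subseteq> B (Suc n) g"
      by (auto simp: B_def less_Suc_eq)
  qed
  have "(\<Sum>b\<in>B (Suc n) g. \<Prod>i<Suc n. f i (b i))
      = (\<Sum>p\<in>{..g n} \<times> B n g. \<Prod>i<Suc n. f i (((\<lambda>(j,b). b(n:=j)) p) i))"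
    unfolding img by (rule sum.reindex[OF inj, unfolded comp_def])
  also have "\<dots> = (\<Sum>p\<in>{..g n} \<times> B n g. (\<Prod>i<n. f i (snd p i)) * f n (fst p))"
    by (rule sum.cong) (auto simp: prod.lessThan_Suc intro!: prod.cong)
  also have "\<dots> = (\<Sum>j\<le>g n. \<Sum>b\<in>B n g. (\<Prod>i<n. f i (b i)) * f n j)"
    by (simp add: sum.cartesian_product split_def)
  also have "\<dots> = (\<Prod>i<n. \<Sum>j\<le>g i. f i j) * (\<Sum>j\<le>g n. f n j)"
    by (simp add: Suc sum_distrib_left sum_distrib_right mult.commute sum.swap[of _ "{..g n}"])
  finally show ?case by simp
qed
definition mono :: "nat \<Rightarrow> (nat \<Rightarrow> nat) \<Rightarrow> (nat \<Rightarrow> 3) \<Rightarrow> 3" where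
  "mono n a x = (\<Prod>i<n. x i ^ a i)"
definition coef :: "nat \<Rightarrow> (nat \<Rightarrow> nat) \<Rightarrow> (nat \<Rightarrow> nat) \<Rightarrow> 3" where
  "coef n g b = (\<Prod>i<n. of_nat (g i choose b i) * (-1) ^ g i)"
definition dif :: "(nat \<Rightarrow> nat) \<Rightarrow> (nat \<Rightarrow> nat) \<Rightarrow> nat \<Rightarrow> nat" where
  "dif g b = (\<lambda>i. g i - b i)"

lemma binom1: "(-((a::3) + b)) ^ k = (\<Sum>j\<le>k. of_nat (k choose j) * (-1) ^ k * a ^ (k - j) * b ^ j)"
proof -
  have "(-(a + b)) ^ k = (-1) ^ k * (b + a) ^ k"
    by (metis add.commute minus_one_mult_self mult_minus1 power_mult_distrib)
  also have "\<dots> = (-1) ^ k * (\<Sum>j\<le>k. of_nat (k choose j) * b ^ j * a ^ (k - j))"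
    by (simp add: binomial_ring)
  also have "\<dots> = (\<Sum>j\<le>k. of_nat (k choose j) * (-1) ^ k * a ^ (k - j) * b ^ j)"
    by (simp add: sum_distrib_left algebra_simps)
  finally show ?thesis .
qed

lemma expand:
  "mono n g (\<lambda>i. -(x i + y i)) = (\<Sum>b\<in>B n g. coef n g b * mono n (dif g b) x * mono n b y)"
proof -
  have "mono n g (\<lambda>i. -(x i + y i)) =
     (\<Prod>i<n. \<Sum>j\<le>g i. of_nat (g i choose j) * (-1) ^ g i * x i ^ (g i - j) * y i ^ j)"
    unfolding mono_def by (rule prod.cong[OF refl], rule binom1)
  also have "\<dots> = (\<Sum>b\<in>B n g. \<Prod>i<n. of_nat (g i choose b i) * (-1) ^ g i * x i ^ (g i - b i) * y i ^ b i)"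
    by (rule prod_sum_B)
  also have "\<dots> = (\<Sum>b\<in>B n g. coef n g b * mono n (dif g b) x * mono n b y)"
    by (simp add: coef_def mono_def dif_def prod.distrib)
  finally show ?thesis .
qed
definition deg :: "nat \<Rightarrow> (nat \<Rightarrow> nat) \<Rightarrow> nat" where
  "deg n a = (\<Sum>i<n. a i)"

lemma deg_dif: "b \<in> B n g \<Longrightarrow> deg n (dif g b) + deg n b = deg n g"
  unfolding deg_def dif_def B_def by (simp add: sum.distrib[symmetric])

lemma dif_in_M:
  assumes "g \<in> M n d" "b \<in> B n g" "deg n (dif g b) \<le> e"
  shows "dif g b \<in> M n e"
  using assms unfolding M_def B_def dif_def deg_def by force

lemma b_in_M:
  assumes "g \<in> M n d" "b \<in> B n g" "\<not> deg n (dif g b) \<le> d div 2"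
  shows "b \<in> M n (d div 2)"
proof -
  have "deg n g \<le> d" using assms(1) by (simp add: M_def deg_def)
  then have "deg n b \<le> d div 2" using deg_dif[OF assms(2)] assms(3) by linarith
  then show ?thesis using assms(1,2) unfolding M_def B_def deg_def by force
qed

lemma cancel3: "(a::3) * p = b * p \<Longrightarrow> p \<noteq> 0 \<Longrightarrow> a = b"
  using ex3[of a] ex3[of b] ex3[of p] by auto

lemma neg_double: "-((y::3) + y) = y"
  using ex3[of y] by auto
theorem mainTheorem4:
  fixes n d :: nat and A :: "(nat \<Rightarrow> 3) set" and c :: "(nat \<Rightarrow> nat) \<Rightarrow> 3"
  assumes "n \<ge> 1"
    and "A \<subseteq> F3vecs n"
    and "\<forall>a\<in>A. \<forall>b\<in>A. \<forall>c'\<in>A. b \<noteq> c' \<longrightarrow> (\<exists>i. a i + b i + c' i \<noteq> 0)"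
    and "\<forall>x\<in>F3vecs n - A. poly_eval n d c x = 0"
  shows "card {a\<in>A. poly_eval n d c a \<noteq> 0} \<le> 2 * card (M n (d div 2))"
proof -
  define e where "e = d div 2"
  define P where "P = poly_eval n d c"
  define S where "S = {a\<in>A. P a \<noteq> 0}"
  define mu where "mu v a = (\<Sum>x\<in>S. v x * mono n a x)" for v a
  define T where "T v y g b = c g * coef n g b * mu v (dif g b) * mono n b y" for v y g b
  define first where "first v y = (\<Sum>g\<in>M n d. \<Sum>b\<in>B n g. if deg n (dif g b) \<le> e then T v y g b else 0)" for v y
  define K where "K v b' = (\<Sum>g\<in>M n d. if b' \<in> B n g \<and> \<not> deg n (dif g b') \<le> e
      then c g * coef n g b' * mu v (dif g b') else 0)" for v b'
  have SA: "S \<subseteq> A" unfolding S_def by auto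
  have finS: "finite S" using finite_subset[OF subset_trans[OF SA assms(2)] finite_F3vecs] .
  have pe: "P z = (\<Sum>g\<in>M n d. c g * mono n g z)" for z
    unfolding P_def poly_eval_def mono_def ..
  have ident: "(\<Sum>x\<in>S. v x * P (\<lambda>i. -(x i + y i))) = (\<Sum>g\<in>M n d. \<Sum>b\<in>B n g. T v y g b)" for v y
  proof -
    have "(\<Sum>x\<in>S. v x * P (\<lambda>i. -(x i + y i))) =
      (\<Sum>x\<in>S. \<Sum>g\<in>M n d. \<Sum>b\<in>B n g. v x * c g * coef n g b * mono n (dif g b) x * mono n b y)"
      unfolding pe expand by (simp add: sum_distrib_left mult.assoc)
    also have "\<dots> = (\<Sum>g\<in>M n d. \<Sum>b\<in>B n g. \<Sum>x\<in>S. v x * c g * coef n g b * mono n (dif g b) x * mono n b y)"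
      by (simp add: sum.swap[of _ S])
    also have "\<dots> = (\<Sum>g\<in>M n d. \<Sum>b\<in>B n g. T v y g b)"
      unfolding T_def mu_def
      by (simp add: sum_distrib_left sum_distrib_right mult.assoc mult.left_commute)
    finally show ?thesis .
  qed
  have split: "(\<Sum>g\<in>M n d. \<Sum>b\<in>B n g. T v y g b) = first v y + (\<Sum>b'\<in>M n e. K v b' * mono n b' y)" for v y
  proof -
    have "(\<Sum>g\<in>M n d. \<Sum>b\<in>B n g. T v y g b) = first v y +
       (\<Sum>g\<in>M n d. \<Sum>b\<in>B n g. if \<not> deg n (dif g b) \<le> e then T v y g b else 0)"
      unfolding first_def sum.distrib[symmetric] by (rule sum.cong[OF refl], rule sum.cong) auto
    moreover have "(\<Sum>b\<in>B n g. if \<not> deg n (dif g b) \<le> e then T v y g b else 0) =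
       (\<Sum>b'\<in>M n e. if b' \<in> B n g \<and> \<not> deg n (dif g b') \<le> e then T v y g b' else 0)"
      if g: "g \<in> M n d" for g
    proof -
      let ?C = "{b\<in>B n g. \<not> deg n (dif g b) \<le> e}"
      have C1: "M n e \<inter> ?C = ?C" using b_in_M[OF g] e_def by auto
      have "(\<Sum>b\<in>B n g. if \<not> deg n (dif g b) \<le> e then T v y g b else 0) = sum (T v y g) (B n g \<inter> {b. \<not> deg n (dif g b) \<le> e})"
        by (simp add: sum.inter_restrict[OF finite_B])
      also have "\<dots> = sum (T v y g) (M n e \<inter> ?C)" 
      proof -
        have "B n g \<inter> {b. \<not> deg n (dif g b) \<le> e} = M n e \<inter> ?C" using C1 by blast
        then show ?thesis by (simp only:)
      qed
      also have "\<dots> = (\<Sum>b'\<in>M n e. if b' \<in> ?C then T v y g b' else 0)"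
        by (rule sum.inter_restrict[OF finite_M])
      finally show ?thesis by simp
    qed
    moreover have "(\<Sum>g\<in>M n d. \<Sum>b'\<in>M n e. if b' \<in> B n g \<and> \<not> deg n (dif g b') \<le> e then T v y g b' else 0)
        = (\<Sum>b'\<in>M n e. K v b' * mono n b' y)"
      unfolding K_def T_def sum_distrib_right
      by (subst sum.swap) (intro sum.cong refl, simp)
    ultimately show ?thesis by simp
  qed
  have diag: "(\<Sum>x\<in>S. v x * P (\<lambda>i. -(x i + y i))) = v y * P y" if y: "y \<in> S" for v y
  proof -
    have "(\<Sum>x\<in>S. v x * P (\<lambda>i. -(x i + y i))) = v y * P (\<lambda>i. -(y i + y i)) + (\<Sum>x\<in>S - {y}. v x * P (\<lambda>i. -(x i + y i)))"
      by (rule sum.remove[OF finS y])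
    moreover have "P (\<lambda>i. -(x i + y i)) = 0" if x: "x \<in> S - {y}" for x
    proof -
      have xA: "x \<in> A" "y \<in> A" "x \<noteq> y" using x y SA by auto
      have "x \<in> F3vecs n" "y \<in> F3vecs n" using xA assms(2) by auto
      then have "(\<lambda>i. -(x i + y i)) \<in> F3vecs n" unfolding F3vecs_def by simp
      moreover have "(\<lambda>i. -(x i + y i)) \<notin> A"
      proof
        assume zA: "(\<lambda>i. -(x i + y i)) \<in> A"
        from assms(3)[rule_format, OF zA xA] show False by simp
      qed
      ultimately show ?thesis using assms(4) unfolding P_def by blast
    qed
    moreover have "(\<lambda>i. -(y i + y i)) = y" by (rule ext) (rule neg_double)
    ultimately show ?thesis by simp
  qed
  define Phi where "Phi v = (restrict (mu v) (M n e), restrict (K v) (M n e))" for v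
  have inj: "inj_on Phi (PiE S (\<lambda>_. UNIV))"
  proof (rule inj_onI)
    fix v w assume v: "v \<in> PiE S (\<lambda>_. UNIV)" and w: "w \<in> PiE S (\<lambda>_. UNIV)" and eq: "Phi v = Phi w"
    have mu_eq: "mu v a = mu w a" if "a \<in> M n e" for a
      using fun_cong[OF arg_cong[OF eq, of fst], of a] that by (simp add: Phi_def)
    have K_eq: "K v a = K w a" if "a \<in> M n e" for a
      using fun_cong[OF arg_cong[OF eq, of snd], of a] that by (simp add: Phi_def)
    have fe: "first v y = first w y" for y
      unfolding first_def T_def
      by (intro sum.cong refl) (auto simp: mu_eq dif_in_M)
    have "v y = w y" if y: "y \<in> S" for y
    proof -
      have "v y * P y = w y * P y"
        using diag[OF y, of v] diag[OF y, of w] ident[of v y] ident[of w y] split[of v y] split[of w y]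
          fe[of y] K_eq by simp
      then show ?thesis using cancel3 y S_def by auto
    qed
    then show "v = w" using PiE_ext[OF v w] by blast
  qed
  have img: "Phi ` PiE S (\<lambda>_. UNIV) \<subseteq> PiE (M n e) (\<lambda>_. UNIV) \<times> PiE (M n e) (\<lambda>_. UNIV)"
    by (auto simp: Phi_def)
  have "card (PiE S (\<lambda>_. UNIV::3 set)) \<le> card (PiE (M n e) (\<lambda>_. UNIV::3 set) \<times> PiE (M n e) (\<lambda>_. UNIV::3 set))"
    by (rule card_inj_on_le[OF inj img]) (simp add: finite_PiE finite_M)
  then have "(3::nat) ^ card S \<le> 3 ^ card (M n e) * 3 ^ card (M n e)"
    by (simp add: card_PiE finS finite_M card_cartesian_product)
  then have "(3::nat) ^ card S \<le> 3 ^ (2 * card (M n e))" by (simp add: power_add[symmetric] mult_2)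
  then have "card S \<le> 2 * card (M n e)" by (rule power_le_imp_le_exp[rotated]) simp
  then show ?thesis unfolding S_def P_def e_def .
qed
end
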